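(* Let $(Q,\rightarrow)$ be a finite transition system, $\mathscr{R}$ a preorder on $Q$ and $\mathscr{P}\subseteq\mathscr{R}$ an equivalence relation with a representative $E.\mathrm{rep}\in E$ fixed for each block $E$ of $\mathscr{P}$, such that there is no pair of a block $E$ of $\mathscr{P}$ and a block $B$ of $\mathscr{R}$ with $E\rightarrow B$ and $\mathrm{RelCount}_{(\mathscr{P},\mathscr{R})}(E,B)=0$. Let $E$ be a block of $\mathscr{P}$ and $B$ a block of $\mathscr{R}$ with $E\rightarrow B$. Then $E.\mathrm{rep}\in\rightarrow_{\mathscr{R}}^{-1}(\mathscr{R}(B))$, i.e. there is $q$ with $E.\mathrm{rep}\rightarrow_{\mathscr{R}} q$ and $B\,\mathscr{R}\,q$.
   Context: A preorder is a reflexive transitive relation; its blocks are $[q]_{\mathscr{R}}=\{q'\mid q\,\mathscr{R}\,q'\wedge q'\,\mathscr{R}\,q\}$. For sets, $X\rightarrow Y$ means some $x\in X,y\in Y$ have $x\rightarrow y$; $X\,\mathscr{R}\,Y$ means $(X\times Y)\cap\mathscr{R}\ne\emptyset$. $\mathrm{RelCount}_{(\mathscr{P},\mathscr{R})}(E,B)=|\{E'\text{ block of }\mathscr{P}\mid E.\mathrm{rep}\rightarrow E'\wedge B\,\mathscr{R}\,E'\}|$. A transition $q\rightarrow q'$ is $\mathscr{R}$-maximal, $q\rightarrow_{\mathscr{R}}q'$, if for all $q''$, ($q\rightarrow q''$ and $q'\,\mathscr{R}\,q''$) implies $q''\in[q']_{\mathscr{R}}$. *)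

theory Defs
  imports Main
begin

definition rblock :: "('a \<times> 'a) set \<Rightarrow> 'a \<Rightarrow> 'a set" where
  "rblock R q = {q'. (q, q') \<in> R \<and> (q', q) \<in> R}"

definition rblocks :: "'a set \<Rightarrow> ('a \<times> 'a) set \<Rightarrow> 'a set set" where
  "rblocks Q R = {rblock R q | q. q \<in> Q}"

definition set_trans :: "('a \<times> 'a) set \<Rightarrow> 'a set \<Rightarrow> 'a set \<Rightarrow> bool" where
  "set_trans T X Y \<longleftrightarrow> (\<exists>x\<in>X. \<exists>y\<in>Y. (x, y) \<in> T)"

definition set_rel :: "('a \<times> 'a) set \<Rightarrow> 'a set \<Rightarrow> 'a set \<Rightarrow> bool" where
  "set_rel R X Y \<longleftrightarrow> (X \<times> Y) \<inter> R \<noteq> {}"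

definition RelCount ::
  "'a set \<Rightarrow> ('a \<times> 'a) set \<Rightarrow> ('a set \<Rightarrow> 'a) \<Rightarrow> ('a \<times> 'a) set \<Rightarrow> ('a \<times> 'a) set
     \<Rightarrow> 'a set \<Rightarrow> 'a set \<Rightarrow> nat" where
  "RelCount Q T rep P R E B =
     card {E' \<in> Q // P. set_trans T {rep E} E' \<and> set_rel R B E'}"

definition max_trans :: "('a \<times> 'a) set \<Rightarrow> ('a \<times> 'a) set \<Rightarrow> 'a \<Rightarrow> 'a \<Rightarrow> bool" where
  "max_trans T R q q' \<longleftrightarrow> (q, q') \<in> T \<and>
     (\<forall>q''. (q, q'') \<in> T \<and> (q', q'') \<in> R \<longrightarrow> q'' \<in> rblock R q')"

end

theory Submission
  imports Defs
begin

theorem lemma4: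
  fixes Q :: "'a set" and T R P :: "('a \<times> 'a) set" and rep :: "'a set \<Rightarrow> 'a"
  assumes "finite Q"
    and "T \<subseteq> Q \<times> Q"
    and "refl_on Q R" and "trans R"
    and "equiv Q P" and "P \<subseteq> R"
    and "\<forall>E \<in> Q // P. rep E \<in> E"
    and "\<not> (\<exists>E \<in> Q // P. \<exists>B \<in> rblocks Q R.
             set_trans T E B \<and> RelCount Q T rep P R E B = 0)"
    and "E \<in> Q // P" and "B \<in> rblocks Q R" and "set_trans T E B"
  shows "\<exists>q. max_trans T R (rep E) q \<and> set_rel R B {q}"
proof -
  have "RelCount Q T rep P R E B \<noteq> 0" using assms(8-11) by metis
  then have "{E' \<in> Q // P. set_trans T {rep E} E' \<and> set_rel R B E'} \<noteq> {}"
    unfolding RelCount_def by (metis card.empty)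
  then obtain E' where E': "E' \<in> Q // P" "set_trans T {rep E} E'" "set_rel R B E'" by blast
  obtain q0 where q0: "q0 \<in> E'" "(rep E, q0) \<in> T" using E'(2) unfolding set_trans_def by auto
  obtain b e where be: "b \<in> B" "e \<in> E'" "(b, e) \<in> R" using E'(3) unfolding set_rel_def by auto
  have "(e, q0) \<in> P" using E'(1) q0(1) be(2) assms(5)
    by (metis quotient_eq_iff)
  then have "(e, q0) \<in> R" using assms(6) by auto
  then have bq0: "(b, q0) \<in> R" using be(3) assms(4) by (meson transD)
  define S where "S = {q. (rep E, q) \<in> T \<and> (q0, q) \<in> R}"
  define U where "U = (\<lambda>m. {x \<in> S. (m, x) \<in> R})"
  have SQ: "S \<subseteq> Q" using assms(2) S_def by auto
  have q0Q: "q0 \<in> Q" using q0(2) assms(2) by auto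
  have "q0 \<in> S" using q0 q0Q assms(3) unfolding S_def refl_on_def by auto
  then obtain m where m: "m \<in> S" "\<And>y. y \<in> S \<Longrightarrow> card (U m) \<le> card (U y)"
    using ex_has_least_nat[of "\<lambda>x. x \<in> S" q0 "\<lambda>x. card (U x)"] by blast
  have fin: "finite (U x)" for x using SQ assms(1) U_def by (metis (no_types, lifting) finite_subset mem_Collect_eq subsetI)
  have maxm: "(x, m) \<in> R" if "x \<in> S" "(m, x) \<in> R" for x
  proof (rule ccontr)
    assume nx: "(x, m) \<notin> R"
    have "U x \<subseteq> U m" using that assms(4) unfolding U_def by (auto dest: transD)
    moreover have "m \<in> U m" using m(1) SQ assms(3) unfolding U_def refl_on_def by auto
    moreover have "m \<notin> U x" using nx unfolding U_def by auto
    ultimately have "U x \<subset> U m" by blast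
    then have "card (U x) < card (U m)" using fin by (simp add: psubset_card_mono)
    with m(2)[OF that(1)] show False by simp
  qed
  have "max_trans T R (rep E) m"
    unfolding max_trans_def
  proof (intro conjI allI impI)
    show "(rep E, m) \<in> T" using m(1) S_def by auto
    fix q'' assume h: "(rep E, q'') \<in> T \<and> (m, q'') \<in> R"
    then have "q'' \<in> S" using m(1) assms(4) unfolding S_def by (auto dest: transD)
    then have "(q'', m) \<in> R" using maxm h by auto
    then show "q'' \<in> rblock R m" using h unfolding rblock_def by auto
  qed
  moreover have "set_rel R B {m}"
    using bq0 m(1) be(1) assms(4) unfolding set_rel_def S_def by (auto dest: transD)
  ultimately show ?thesis by blast
qed

end
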